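(* For $\hat{\Sigma}$ and $\bar{\Sigma}$, we have $\rho(\hat{\boldsymbol{\mathcal{A}}}) = \rho(\bar{\boldsymbol{\mathcal{A}}})$ and $\xi(\hat{\mathbf{A}}_{1:r}) = \xi(\bar{\mathbf{A}}_{1:s})$.
   Context: $\Sigma$ is the MJS $\mathbf{x}_{t+1}=\mathbf{A}_{\omega_t}\mathbf{x}_t+\mathbf{B}_{\omega_t}\mathbf{u}_t$ with $s$ modes and Markov transition matrix $\mathbf{T}$. Given a partition $\hat{\Omega}_{1:r}$ of $[s]$, the reduced MJS $\hat{\Sigma}$ has $r$ modes with $\hat{\mathbf{A}}_k=\frac{1}{|\hat{\Omega}_k|}\sum_{i\in\hat{\Omega}_k}\mathbf{A}_i$, $\hat{\mathbf{B}}_k=\frac{1}{|\hat{\Omega}_k|}\sum_{i\in\hat{\Omega}_k}\mathbf{B}_i$, $\hat{\mathbf{T}}(k,l)=\frac{1}{|\hat{\Omega}_k|}\sum_{i\in\hat{\Omega}_k,j\in\hat{\Omega}_l}\mathbf{T}(i,j)$. The expanded MJS $\bar{\Sigma}$ has $s$ modes with $\bar{\mathbf{A}}_i=\hat{\mathbf{A}}_k$, $\bar{\mathbf{B}}_i=\hat{\mathbf{B}}_k$ for $i\in\hat{\Omega}_k$, and a Markov matrix $\bar{\mathbf{T}}$ satisfying $\sum_{j\in\hat{\Omega}_l}\bar{\mathbf{T}}(i,j)=\hat{\mathbf{T}}(k,l)$ for all $k,l$ and $i\in\hat{\Omega}_k$ (and $\|\bar{\mathbf{T}}-\mathbf{T}\|_\infty,\|\bar{\mathbf{T}}-\mathbf{T}\|_F\le\epsilon_{\mathbf{T}}$).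 The augmented state matrix $\hat{\boldsymbol{\mathcal{A}}}\in\mathbb{R}^{rn^2\times rn^2}$ has $ij$-th $n^2\times n^2$ block $\hat{\mathbf{T}}(j,i)\,\hat{\mathbf{A}}_j\otimes\hat{\mathbf{A}}_j$, and $\bar{\boldsymbol{\mathcal{A}}}\in\mathbb{R}^{sn^2\times sn^2}$ has $ij$-th block $\bar{\mathbf{T}}(j,i)\,\bar{\mathbf{A}}_j\otimes\bar{\mathbf{A}}_j$; $\rho(\cdot)$ is the spectral radius and $\xi(\cdot)$ the joint spectral radius $\xi(\mathbf{M}_{1:m})=\lim_{k\to\infty}\max_{\sigma_{1:k}}\|\mathbf{M}_{\sigma_1}\cdots\mathbf{M}_{\sigma_k}\|^{1/k}$. *)

theory Defs
  imports "HOL-Analysis.Analysis" "Jordan_Normal_Form.Spectral_Radius"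
begin

definition kron :: "real mat \<Rightarrow> real mat \<Rightarrow> real mat" where
  "kron A B = mat (dim_row A * dim_row B) (dim_col A * dim_col B)
     (\<lambda>(i,j). A $$ (i div dim_row B, j div dim_col B) * B $$ (i mod dim_row B, j mod dim_col B))"

(* augmented state matrix: N modes, state dimension n; ij-th n^2 x n^2 block is T(j,i) A_j \<otimes> A_j *)
definition aug_mat :: "nat \<Rightarrow> nat \<Rightarrow> (nat \<Rightarrow> nat \<Rightarrow> real) \<Rightarrow> (nat \<Rightarrow> real mat) \<Rightarrow> real mat" where
  "aug_mat n N T A = mat (N * n\<^sup>2) (N * n\<^sup>2)
     (\<lambda>(a,b). T (b div n\<^sup>2) (a div n\<^sup>2) * kron (A (b div n\<^sup>2)) (A (b div n\<^sup>2)) $$ (a mod n\<^sup>2, b mod n\<^sup>2))"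

definition rho :: "real mat \<Rightarrow> real" where
  "rho M = spectral_radius (map_mat complex_of_real M)"

definition frob_norm :: "real mat \<Rightarrow> real" where
  "frob_norm M = sqrt (\<Sum>i<dim_row M. \<Sum>j<dim_col M. (M $$ (i,j))\<^sup>2)"

definition mat_word_prod :: "nat \<Rightarrow> (nat \<Rightarrow> real mat) \<Rightarrow> nat list \<Rightarrow> real mat" where
  "mat_word_prod n M \<sigma> = foldr (\<lambda>i P. M i * P) \<sigma> (1\<^sub>m n)"

definition jsr :: "nat \<Rightarrow> (nat \<Rightarrow> real mat) \<Rightarrow> nat \<Rightarrow> real" where
  "jsr n M m = lim (\<lambda>k. Max {frob_norm (mat_word_prod n M \<sigma>) powr (1 / real k) | \<sigma>.
       length \<sigma> = k \<and> set \<sigma> \<subseteq> {..<m}})"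

definition markov :: "nat \<Rightarrow> (nat \<Rightarrow> nat \<Rightarrow> real) \<Rightarrow> bool" where
  "markov s T \<longleftrightarrow> (\<forall>i<s. \<forall>j<s. T i j \<ge> 0) \<and> (\<forall>i<s. (\<Sum>j<s. T i j) = 1)"

definition red_mat :: "(nat \<Rightarrow> nat set) \<Rightarrow> (nat \<Rightarrow> real mat) \<Rightarrow> nat \<Rightarrow> nat \<Rightarrow> nat \<Rightarrow> real mat" where
  "red_mat \<Omega> A nr nc k = mat nr nc (\<lambda>(a,b). (\<Sum>i\<in>\<Omega> k. A i $$ (a,b)) / real (card (\<Omega> k)))"

definition red_T :: "(nat \<Rightarrow> nat set) \<Rightarrow> (nat \<Rightarrow> nat \<Rightarrow> real) \<Rightarrow> nat \<Rightarrow> nat \<Rightarrow> real" where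
  "red_T \<Omega> T k l = (\<Sum>i\<in>\<Omega> k. \<Sum>j\<in>\<Omega> l. T i j) / real (card (\<Omega> k))"

definition is_partition :: "nat \<Rightarrow> nat \<Rightarrow> (nat \<Rightarrow> nat set) \<Rightarrow> bool" where
  "is_partition s r \<Omega> \<longleftrightarrow> (\<forall>k<r. \<Omega> k \<noteq> {}) \<and> (\<forall>k<r. \<forall>l<r. k \<noteq> l \<longrightarrow> \<Omega> k \<inter> \<Omega> l = {})
     \<and> (\<Union>k<r. \<Omega> k) = {..<s}"

end

theory Submission
  imports Defs
begin

lemma smult_pow_mat:
  assumes A: "(A :: 'a::comm_ring_1 mat) \<in> carrier_mat N N"
  shows "(x \<cdot>\<^sub>m A) ^\<^sub>m k = (x ^ k) \<cdot>\<^sub>m (A ^\<^sub>m k)"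
proof (induct k)
  case 0 then show ?case using A by (auto intro!: eq_matI)
next
  case (Suc k)
  have "(x \<cdot>\<^sub>m A) ^\<^sub>m Suc k = (x ^ k \<cdot>\<^sub>m A ^\<^sub>m k) * (x \<cdot>\<^sub>m A)" using Suc by simp
  also have "\<dots> = x ^ k \<cdot>\<^sub>m (A ^\<^sub>m k * (x \<cdot>\<^sub>m A))"
    by (rule mult_smult_assoc_mat[of _ N N _ N], use A in auto)
  also have "\<dots> = x ^ k \<cdot>\<^sub>m (x \<cdot>\<^sub>m (A ^\<^sub>m k * A))"
    by (subst mult_smult_distrib[of _ N N _ N], use A in auto)
  also have "\<dots> = (x ^ Suc k) \<cdot>\<^sub>m (A ^\<^sub>m Suc k)"
    by (auto intro!: eq_matI simp: mult.assoc mult.commute)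
  finally show ?case .
qed

lemma map_pow_real:
  assumes M: "(M :: real mat) \<in> carrier_mat N N"
  shows "map_mat complex_of_real (M ^\<^sub>m k) = (map_mat complex_of_real M) ^\<^sub>m k"
  by (rule of_real_hom.mat_hom_pow[OF M])

lemma rho_nonneg:
  assumes M: "(M :: real mat) \<in> carrier_mat N N" and N: "N > 0"
  shows "rho M \<ge> 0"
proof -
  have "map_mat complex_of_real M \<in> carrier_mat N N" using M by simp
  from spectral_radius_mem_max(1)[OF this N] show ?thesis unfolding rho_def by auto
qed

lemma growth_upper:
  fixes M :: "real mat"
  assumes M: "M \<in> carrier_mat N N" and c: "0 < c" and lt: "rho M < c"
  shows "\<exists>C. \<forall>k a b. a < N \<longrightarrow> b < N \<longrightarrow> \<bar>(M ^\<^sub>m k) $$ (a,b)\<bar> \<le> C * c^k"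
proof (cases "N = 0")
  case True then show ?thesis by auto
next
  case False
  define Mc where "Mc = map_mat complex_of_real M"
  have Mc: "Mc \<in> carrier_mat N N" using M by (simp add: Mc_def)
  define S where "S = complex_of_real (1/c) \<cdot>\<^sub>m Mc"
  have S: "S \<in> carrier_mat N N" using Mc by (simp add: S_def)
  have "spectral_radius S < 1"
  proof -
    from spectral_radius_mem_max(1)[OF S] False obtain \<mu> where mu: "\<mu> \<in> spectrum S" "spectral_radius S = norm \<mu>" by auto
    from mu obtain v where ev: "eigenvector S v \<mu>" by (auto simp: spectrum_def eigenvalue_def)
    have v: "v \<in> carrier_vec N" "v \<noteq> 0\<^sub>v N" "S *\<^sub>v v = \<mu> \<cdot>\<^sub>v v" using ev S by (auto simp: eigenvector_def)
    have "Mc *\<^sub>v v = (complex_of_real c * \<mu>) \<cdot>\<^sub>v v"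
    proof (rule eq_vecI)
      fix i assume i: "i < dim_vec ((complex_of_real c * \<mu>) \<cdot>\<^sub>v v)"
      hence iN: "i < N" using v by auto
      have "(S *\<^sub>v v) $ i = \<mu> * v $ i" using v iN by simp
      moreover have "(S *\<^sub>v v) $ i = (\<Sum>j<N. Mc $$ (i,j) * v $ j) / complex_of_real c"
        using iN Mc v(1) by (simp add: S_def scalar_prod_def sum_divide_distrib atLeast0LessThan)
      moreover have "(Mc *\<^sub>v v) $ i = (\<Sum>j<N. Mc $$ (i,j) * v $ j)"
        using iN Mc v(1) by (simp add: scalar_prod_def atLeast0LessThan)
      ultimately show "(Mc *\<^sub>v v) $ i = ((complex_of_real c * \<mu>) \<cdot>\<^sub>v v) $ i"
        using iN v c by (simp add: field_simps)
    qed (use v Mc in auto)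
    hence "eigenvector Mc v (complex_of_real c * \<mu>)" using v Mc by (auto simp: eigenvector_def)
    hence "complex_of_real c * \<mu> \<in> spectrum Mc" by (auto simp: spectrum_def eigenvalue_def)
    from spectral_radius_mem_max(2)[OF Mc _ imageI[OF this, of norm]]
    have "norm (complex_of_real c * \<mu>) \<le> rho M" using False by (simp add: rho_def Mc_def)
    hence "c * norm \<mu> \<le> rho M" using c by (simp add: norm_mult)
    hence "c * norm \<mu> < c * 1" using lt by linarith
    hence "norm \<mu> < 1" using c by (simp only: mult_less_cancel_left_pos)
    with c mu show ?thesis by simp
  qed
  from spectral_radius_jnf_norm_bound_less_1_upper_triangular[OF S this]
  obtain C where C: "\<And>k. norm_bound (S ^\<^sub>m k) C" by auto
  show ?thesis
  proof (intro exI allI impI)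
    fix k a b assume a: "a < N" and b: "b < N"
    have "S ^\<^sub>m k = complex_of_real (1/c) ^ k \<cdot>\<^sub>m (Mc ^\<^sub>m k)"
      unfolding S_def by (rule smult_pow_mat[OF Mc])
    also have "Mc ^\<^sub>m k = map_mat complex_of_real (M ^\<^sub>m k)"
      unfolding Mc_def by (rule map_pow_real[OF M, symmetric])
    finally have "(S ^\<^sub>m k) $$ (a,b) = complex_of_real ((1/c)^k * (M ^\<^sub>m k) $$ (a,b))"
      using a b M by simp
    moreover have "norm ((S ^\<^sub>m k) $$ (a,b)) \<le> C" using C[of k] a b S unfolding norm_bound_def by auto
    ultimately have "(1/c)^k * \<bar>(M ^\<^sub>m k) $$ (a,b)\<bar> \<le> C" using c by (simp add: norm_mult norm_power norm_divide)
    hence "\<bar>(M ^\<^sub>m k) $$ (a,b)\<bar> \<le> C * c^k" using c by (simp add: field_simps power_divide)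
    then show "\<bar>(M ^\<^sub>m k) $$ (a,b)\<bar> \<le> C * c^k" .
  qed
qed

lemma growth_lower:
  fixes M :: "real mat"
  assumes M: "M \<in> carrier_mat N N" and N: "N > 0" and c: "0 < c" and gt: "c < rho M"
    and bnd: "\<And>k a b. a < N \<Longrightarrow> b < N \<Longrightarrow> \<bar>(M ^\<^sub>m k) $$ (a,b)\<bar> \<le> C * c^k"
  shows False
proof -
  define Mc where "Mc = map_mat complex_of_real M"
  have Mc: "Mc \<in> carrier_mat N N" using M by (simp add: Mc_def)
  from spectral_radius_mem_max(1)[OF Mc N] obtain lam where lam: "lam \<in> spectrum Mc" "rho M = norm lam"
    by (auto simp: rho_def Mc_def)
  from lam obtain v where ev: "eigenvector Mc v lam" by (auto simp: spectrum_def eigenvalue_def)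
  have v: "v \<in> carrier_vec N" "v \<noteq> 0\<^sub>v N" using ev Mc by (auto simp: eigenvector_def)
  then obtain j where j: "j < N" "v $ j \<noteq> 0" by (metis eq_vecI carrier_vecD index_zero_vec)
  define V where "V = (\<Sum>b<N. norm (v $ b))"
  have key: "norm lam ^ k * norm (v $ j) \<le> C * V * c^k" for k
  proof -
    have "(Mc ^\<^sub>m k *\<^sub>v v) = lam^k \<cdot>\<^sub>v v" by (rule eigenvector_pow[OF Mc ev])
    hence "(Mc ^\<^sub>m k *\<^sub>v v) $ j = lam^k * v $ j" using j v by simp
    moreover have "(Mc ^\<^sub>m k *\<^sub>v v) $ j = (\<Sum>b<N. complex_of_real ((M ^\<^sub>m k) $$ (j,b)) * v $ b)"
      using j v M unfolding Mc_def map_pow_real[OF M, symmetric]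
      by (simp add: scalar_prod_def atLeast0LessThan)
    ultimately have "norm (lam^k * v $ j) \<le> (\<Sum>b<N. norm (complex_of_real ((M ^\<^sub>m k) $$ (j,b)) * v $ b))"
      by (metis norm_sum)
    also have "\<dots> \<le> (\<Sum>b<N. C * c^k * norm (v $ b))"
    proof (rule sum_mono)
      fix b assume "b \<in> {..<N}"
      hence "\<bar>(M ^\<^sub>m k) $$ (j,b)\<bar> \<le> C * c^k" using bnd j by auto
      thus "norm (complex_of_real ((M ^\<^sub>m k) $$ (j,b)) * v $ b) \<le> C * c^k * norm (v $ b)"
        by (simp add: norm_mult mult_right_mono)
    qed
    also have "\<dots> = C * V * c^k" by (simp add: V_def sum_distrib_left mult_ac)
    finally show ?thesis by (simp add: norm_mult norm_power)
  qed
  have q: "norm lam / c > 1" using gt lam c by simp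
  from real_arch_pow[OF q, of "C * V / norm (v $ j)"] obtain k where
    k: "C * V / norm (v $ j) < (norm lam / c) ^ k" by auto
  have "norm lam ^ k * norm (v $ j) \<le> C * V * c^k" by (rule key)
  hence "(norm lam / c) ^ k \<le> C * V / norm (v $ j)" using c j
    by (simp add: power_divide field_simps)
  with k show False by simp
qed


inductive cpf :: "(nat \<Rightarrow> nat \<Rightarrow> nat \<Rightarrow> nat \<Rightarrow> real) \<Rightarrow> bool" where
  cpf_zero: "cpf (\<lambda>_ _ _ _. 0)"
| cpf_step: "cpf f \<Longrightarrow> w \<ge> 0 \<Longrightarrow> cpf (\<lambda>a b c d. f a b c d + w * P a c * P b d)"

lemma cpf_add: "cpf g \<Longrightarrow> cpf f \<Longrightarrow> cpf (\<lambda>a b c d. f a b c d + g a b c d)"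
proof (induction g rule: cpf.induct)
  case cpf_zero then show ?case by simp
next
  case (cpf_step g w P)
  have "cpf (\<lambda>a b c d. (f a b c d + g a b c d) + w * P a c * P b d)"
    using cpf_step by (intro cpf.cpf_step) auto
  then show ?case by (simp add: add.assoc)
qed

lemma cpf_scale: "cpf f \<Longrightarrow> t \<ge> 0 \<Longrightarrow> cpf (\<lambda>a b c d. t * f a b c d)"
proof (induction f rule: cpf.induct)
  case cpf_zero then show ?case by (simp add: cpf.cpf_zero)
next
  case (cpf_step f w P)
  have "cpf (\<lambda>a b c d. t * f a b c d + (t * w) * P a c * P b d)"
    using cpf_step by (intro cpf.cpf_step) auto
  then show ?case by (simp add: distrib_left mult.assoc)
qed

lemma cpf_sum: "finite S \<Longrightarrow> (\<And>x. x \<in> S \<Longrightarrow> cpf (F x)) \<Longrightarrow> cpf (\<lambda>a b c d. \<Sum>x\<in>S. F x a b c d)"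
proof (induction S rule: finite_induct)
  case empty then show ?case by (simp add: cpf.cpf_zero)
next
  case (insert x S)
  have "cpf (\<lambda>a b c d. F x a b c d + (\<Sum>x\<in>S. F x a b c d))"
    using insert by (intro cpf_add) auto
  then show ?case using insert by simp
qed

lemma cpf_comp: "cpf f \<Longrightarrow> cpf (\<lambda>a b c d. \<Sum>r1<n. \<Sum>r2<n. f a b r1 r2 * Q r1 c * Q r2 d)"
proof (induction f rule: cpf.induct)
  case cpf_zero then show ?case by (simp add: cpf.cpf_zero)
next
  case (cpf_step f w P)
  define PQ where "PQ = (\<lambda>x y. \<Sum>r<n. P x r * Q r y)"
  have "cpf (\<lambda>a b c d. (\<Sum>r1<n. \<Sum>r2<n. f a b r1 r2 * Q r1 c * Q r2 d) + w * PQ a c * PQ b d)"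
    using cpf_step by (intro cpf.cpf_step) auto
  moreover have "(\<Sum>r1<n. \<Sum>r2<n. (f a b r1 r2 + w * P a r1 * P b r2) * Q r1 c * Q r2 d)
     = (\<Sum>r1<n. \<Sum>r2<n. f a b r1 r2 * Q r1 c * Q r2 d) + w * PQ a c * PQ b d" for a b c d
  proof -
    have "w * PQ a c * PQ b d = w * (\<Sum>r1<n. \<Sum>r2<n. (P a r1 * Q r1 c) * (P b r2 * Q r2 d))"
      by (simp add: PQ_def sum_product mult.assoc)
    also have "\<dots> = (\<Sum>r1<n. \<Sum>r2<n. w * P a r1 * P b r2 * Q r1 c * Q r2 d)"
      by (simp add: sum_distrib_left mult_ac)
    finally show ?thesis by (simp add: distrib_right sum.distrib)
  qed
  ultimately show ?case by simp
qed

lemma cpf_nonneg: "cpf f \<Longrightarrow> f a a c c \<ge> 0"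
proof (induction f rule: cpf.induct)
  case cpf_zero then show ?case by simp
next
  case (cpf_step f w P)
  have "0 \<le> w * (P a c * P a c)" using cpf_step by simp
  then show ?case using cpf_step by (simp add: mult.assoc)
qed

lemma abs_prod_le: "\<bar>(x::real) * y\<bar> \<le> (x\<^sup>2 + y\<^sup>2) / 2"
proof -
  have "0 \<le> (\<bar>x\<bar> - \<bar>y\<bar>)\<^sup>2" by simp
  thus ?thesis by (simp add: power2_eq_square abs_mult algebra_simps)
qed

lemma cpf_bound: "cpf f \<Longrightarrow> \<bar>f a b c d\<bar> \<le> (f a a c c + f b b d d) / 2"
proof (induction f rule: cpf.induct)
  case cpf_zero then show ?case by simp
next
  case (cpf_step f w P)
  have "\<bar>w * P a c * P b d\<bar> = w * \<bar>P a c * P b d\<bar>" using cpf_step by (simp add: abs_mult)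
  also have "\<dots> \<le> w * (((P a c)\<^sup>2 + (P b d)\<^sup>2) / 2)"
    using cpf_step abs_prod_le by (intro mult_left_mono) auto
  finally have "\<bar>w * P a c * P b d\<bar> \<le> w * (((P a c)\<^sup>2 + (P b d)\<^sup>2) / 2)" .
  moreover have "\<bar>f a b c d + w * P a c * P b d\<bar> \<le> \<bar>f a b c d\<bar> + \<bar>w * P a c * P b d\<bar>"
    by (rule abs_triangle_ineq)
  ultimately show ?case using cpf_step
    by (simp add: power2_eq_square algebra_simps)
qed

lemma idx_lt: "i < (s::nat) \<Longrightarrow> p < m \<Longrightarrow> i * m + p < s * m"
proof -
  assume "i < s" "p < m"
  hence "i * m + p < (i + 1) * m" by simp
  also have "\<dots> \<le> s * m" using \<open>i < s\<close> by (intro mult_right_mono) auto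
  finally show ?thesis .
qed

lemma idx_div[simp]: "p < (m::nat) \<Longrightarrow> (i * m + p) div m = i"
  by simp
lemma idx_mod[simp]: "p < (m::nat) \<Longrightarrow> (i * m + p) mod m = p"
  by simp

lemma idx_inj: "p < (m::nat) \<Longrightarrow> q < m \<Longrightarrow> (i * m + p = j * m + q) \<longleftrightarrow> (i = j \<and> p = q)"
  by (metis idx_div idx_mod)

lemma sum_split: "(\<Sum>c<(a::nat) * b. h c) = (\<Sum>i<a. \<Sum>j<b. h (i * b + j))"
  by (simp add: sum_mult_product add.commute)

lemma mult_entry: "X \<in> carrier_mat N N \<Longrightarrow> Y \<in> carrier_mat N N \<Longrightarrow> a < N \<Longrightarrow> b < N \<Longrightarrow>
  (X * Y) $$ (a,b) = (\<Sum>c<N. X $$ (a,c) * Y $$ (c,b))"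
  by (simp add: scalar_prod_def atLeast0LessThan)

lemma aug_carrier: "aug_mat n N T Af \<in> carrier_mat (N * n\<^sup>2) (N * n\<^sup>2)"
  by (simp add: aug_mat_def)

lemma aug_entry:
  assumes "\<forall>j<N. Af j \<in> carrier_mat n n" "i < N" "j < N" "p < n\<^sup>2" "q < n\<^sup>2"
  shows "aug_mat n N T Af $$ (i * n\<^sup>2 + p, j * n\<^sup>2 + q)
     = T j i * (Af j $$ (p div n, q div n) * Af j $$ (p mod n, q mod n))"
proof -
  have "i * n\<^sup>2 + p < N * n\<^sup>2" "j * n\<^sup>2 + q < N * n\<^sup>2" using assms idx_lt by auto
  moreover have "dim_row (Af j) = n" "dim_col (Af j) = n" using assms by auto
  ultimately show ?thesis using assms
    by (simp add: aug_mat_def kron_def power2_eq_square)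
qed


lemma cp_power:
  fixes Af :: "nat \<Rightarrow> real mat" and T :: "nat \<Rightarrow> nat \<Rightarrow> real"
  assumes Af: "\<forall>j<N. Af j \<in> carrier_mat n n" and Tnn: "\<forall>i<N. \<forall>j<N. T i j \<ge> 0"
  shows "i < N \<Longrightarrow> j < N \<Longrightarrow> \<exists>f. cpf f \<and> (\<forall>p1<n. \<forall>p2<n. \<forall>q1<n. \<forall>q2<n.
     (aug_mat n N T Af ^\<^sub>m k) $$ (i * n\<^sup>2 + (p1 * n + p2), j * n\<^sup>2 + (q1 * n + q2)) = f p1 p2 q1 q2)"
proof (induction k arbitrary: i j)
  case 0
  let ?G = "aug_mat n N T Af"
  have dimG: "dim_row ?G = N * n\<^sup>2" by (simp add: aug_mat_def)
  have lt: "x * n + y < n\<^sup>2" if "x < n" "y < n" for x y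
    using idx_lt[OF that] by (simp add: power2_eq_square)
  have lt2: "i' * n\<^sup>2 + (x * n + y) < N * n\<^sup>2" if "i' < N" "x < n" "y < n" for i' x y
    using idx_lt[OF that(1) lt[OF that(2,3)]] .
  have eqiff: "(i * n\<^sup>2 + (p1 * n + p2) = j * n\<^sup>2 + (q1 * n + q2)) \<longleftrightarrow> (i = j \<and> p1 = q1 \<and> p2 = q2)"
    if "p1 < n" "p2 < n" "q1 < n" "q2 < n" for p1 p2 q1 q2
    using idx_inj[OF lt[OF that(1,2)] lt[OF that(3,4)]] idx_inj[OF that(2) that(4)] by auto
  show ?case
  proof (cases "i = j")
    case True
    define I where "I = (\<lambda>x y::nat. if x = y then (1::real) else 0)"
    show ?thesis
    proof (intro exI conjI allI impI)
      show "cpf (\<lambda>a b c d. 0 + 1 * I a c * I b d)" by (intro cpf.intros) auto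
      fix p1 p2 q1 q2 assume "p1 < n" "p2 < n" "q1 < n" "q2 < n"
      then show "(?G ^\<^sub>m 0) $$ (i * n\<^sup>2 + (p1 * n + p2), j * n\<^sup>2 + (q1 * n + q2)) = 0 + 1 * I p1 q1 * I p2 q2"
        using eqiff lt2 0 True dimG by (simp add: I_def)
    qed
  next
    case False
    show ?thesis
    proof (intro exI conjI allI impI)
      show "cpf (\<lambda>a b c d. 0)" by (rule cpf.intros)
      fix p1 p2 q1 q2 assume "p1 < n" "p2 < n" "q1 < n" "q2 < n"
      then show "(?G ^\<^sub>m 0) $$ (i * n\<^sup>2 + (p1 * n + p2), j * n\<^sup>2 + (q1 * n + q2)) = 0"
        using eqiff lt2 0 False dimG by simp
    qed
  qed
next
  case (Suc k)
  let ?G = "aug_mat n N T Af"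
  have lt: "x * n + y < n\<^sup>2" if "x < n" "y < n" for x y
    using idx_lt[OF that] by (simp add: power2_eq_square)
  have lt2: "i' * n\<^sup>2 + (x * n + y) < N * n\<^sup>2" if "i' < N" "x < n" "y < n" for i' x y
    using idx_lt[OF that(1) lt[OF that(2,3)]] .
  have "\<forall>j'. \<exists>f. j' < N \<longrightarrow> cpf f \<and> (\<forall>p1<n. \<forall>p2<n. \<forall>q1<n. \<forall>q2<n.
     (?G ^\<^sub>m k) $$ (i * n\<^sup>2 + (p1 * n + p2), j' * n\<^sup>2 + (q1 * n + q2)) = f p1 p2 q1 q2)"
    using Suc.IH[OF Suc.prems(1)] by blast
  then obtain F where F: "\<And>j'. j' < N \<Longrightarrow> cpf (F j') \<and> (\<forall>p1<n. \<forall>p2<n. \<forall>q1<n. \<forall>q2<n.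
     (?G ^\<^sub>m k) $$ (i * n\<^sup>2 + (p1 * n + p2), j' * n\<^sup>2 + (q1 * n + q2)) = F j' p1 p2 q1 q2)"
    by metis
  define Q where "Q = (\<lambda>x y. Af j $$ (x, y))"
  define f where "f = (\<lambda>a b c d. \<Sum>j'<N. T j j' * (\<Sum>r1<n. \<Sum>r2<n. F j' a b r1 r2 * Q r1 c * Q r2 d))"
  show ?case
  proof (intro exI conjI allI impI)
    show "cpf f" unfolding f_def
      using F Tnn Suc.prems by (intro cpf_sum cpf_scale cpf_comp) auto
    fix p1 p2 q1 q2 assume p: "p1 < n" "p2 < n" "q1 < n" "q2 < n"
    have Gc: "?G \<in> carrier_mat (N * n\<^sup>2) (N * n\<^sup>2)" by (rule aug_carrier)
    have "(?G ^\<^sub>m Suc k) $$ (i * n\<^sup>2 + (p1 * n + p2), j * n\<^sup>2 + (q1 * n + q2))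
      = (\<Sum>c<N * n\<^sup>2. (?G ^\<^sub>m k) $$ (i * n\<^sup>2 + (p1 * n + p2), c) * ?G $$ (c, j * n\<^sup>2 + (q1 * n + q2)))"
      using mult_entry[OF pow_carrier_mat[OF Gc] Gc lt2[OF Suc.prems(1) p(1,2)] lt2[OF Suc.prems(2) p(3,4)]]
      by simp
    also have "\<dots> = (\<Sum>j'<N. \<Sum>r1<n. \<Sum>r2<n. (?G ^\<^sub>m k) $$ (i * n\<^sup>2 + (p1 * n + p2), j' * n\<^sup>2 + (r1 * n + r2))
        * ?G $$ (j' * n\<^sup>2 + (r1 * n + r2), j * n\<^sup>2 + (q1 * n + q2)))"
      by (simp add: sum_split power2_eq_square)
    also have "\<dots> = (\<Sum>j'<N. \<Sum>r1<n. \<Sum>r2<n. F j' p1 p2 r1 r2 * (T j j' * (Q r1 q1 * Q r2 q2)))"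
    proof (intro sum.cong refl)
      fix j' r1 r2 assume j': "j' \<in> {..<N}" and r: "r1 \<in> {..<n}" "r2 \<in> {..<n}"
      have "?G $$ (j' * n\<^sup>2 + (r1 * n + r2), j * n\<^sup>2 + (q1 * n + q2)) = T j j' * (Q r1 q1 * Q r2 q2)"
        using aug_entry[OF Af _ Suc.prems(2) lt lt, of j' r1 r2 q1 q2] j' r p
        by (simp add: Q_def)
      moreover have "(?G ^\<^sub>m k) $$ (i * n\<^sup>2 + (p1 * n + p2), j' * n\<^sup>2 + (r1 * n + r2)) = F j' p1 p2 r1 r2"
        using F[of j'] j' r p by auto
      ultimately show "(?G ^\<^sub>m k) $$ (i * n\<^sup>2 + (p1 * n + p2), j' * n\<^sup>2 + (r1 * n + r2))
        * ?G $$ (j' * n\<^sup>2 + (r1 * n + r2), j * n\<^sup>2 + (q1 * n + q2)) = F j' p1 p2 r1 r2 * (T j j' * (Q r1 q1 * Q r2 q2))"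
        by simp
    qed
    also have "\<dots> = f p1 p2 q1 q2"
      by (simp add: f_def sum_distrib_left mult_ac)
    finally show "(?G ^\<^sub>m Suc k) $$ (i * n\<^sup>2 + (p1 * n + p2), j * n\<^sup>2 + (q1 * n + q2)) = f p1 p2 q1 q2" .
  qed
qed


lemma part_facts:
  assumes part: "is_partition s r \<Omega>"
  shows "\<And>m. m < r \<Longrightarrow> \<Omega> m \<subseteq> {..<s}"
    and "\<And>m. m < r \<Longrightarrow> finite (\<Omega> m)"
    and "\<And>m m' j. m < r \<Longrightarrow> m' < r \<Longrightarrow> j \<in> \<Omega> m \<Longrightarrow> j \<in> \<Omega> m' \<Longrightarrow> m = m'"
    and "\<And>j. j < s \<Longrightarrow> \<exists>m<r. j \<in> \<Omega> m"
    and "{..<s} = (\<Union>m\<in>{..<r}. \<Omega> m)"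
proof -
  have ne: "\<forall>k<r. \<Omega> k \<noteq> {}" and dj: "\<forall>k<r. \<forall>l<r. k \<noteq> l \<longrightarrow> \<Omega> k \<inter> \<Omega> l = {}"
    and un: "(\<Union>k<r. \<Omega> k) = {..<s}"
    using part unfolding is_partition_def by blast+
  show sub: "\<And>m. m < r \<Longrightarrow> \<Omega> m \<subseteq> {..<s}" using un by blast
  show "\<And>m. m < r \<Longrightarrow> finite (\<Omega> m)" using sub finite_subset by blast
  show "\<And>m m' j. m < r \<Longrightarrow> m' < r \<Longrightarrow> j \<in> \<Omega> m \<Longrightarrow> j \<in> \<Omega> m' \<Longrightarrow> m = m'"
    using dj by blast
  show "\<And>j. j < s \<Longrightarrow> \<exists>m<r. j \<in> \<Omega> m" using un by blast
  show "{..<s} = (\<Union>m\<in>{..<r}. \<Omega> m)" using un by simp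
qed

lemma lump_power:
  fixes Af Ah :: "nat \<Rightarrow> real mat" and Tf Th :: "nat \<Rightarrow> nat \<Rightarrow> real"
  assumes part: "is_partition s r \<Omega>"
    and Af: "\<forall>j<s. Af j \<in> carrier_mat n n" and Ah: "\<forall>m<r. Ah m \<in> carrier_mat n n"
    and AfAh: "\<forall>m<r. \<forall>j\<in>\<Omega> m. Af j = Ah m"
    and TS: "\<forall>m<r. \<forall>m'<r. \<forall>j\<in>\<Omega> m. (\<Sum>j'\<in>\<Omega> m'. Tf j j') = Th m m'"
  shows "l < r \<Longrightarrow> m < r \<Longrightarrow> j \<in> \<Omega> m \<Longrightarrow> p < n\<^sup>2 \<Longrightarrow> q < n\<^sup>2 \<Longrightarrow>
    (aug_mat n r Th Ah ^\<^sub>m k) $$ (l * n\<^sup>2 + p, m * n\<^sup>2 + q)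
    = (\<Sum>i\<in>\<Omega> l. (aug_mat n s Tf Af ^\<^sub>m k) $$ (i * n\<^sup>2 + p, j * n\<^sup>2 + q))"
proof (induction k arbitrary: m j q)
  note P = part_facts[OF part]
  let ?G = "aug_mat n s Tf Af"
  let ?H = "aug_mat n r Th Ah"
  case 0
  have js: "j < s" using P(1)[OF 0(2)] 0(3) by auto
  have H0: "?H ^\<^sub>m 0 = 1\<^sub>m (r * n\<^sup>2)" by (simp add: aug_mat_def)
  have G0: "?G ^\<^sub>m 0 = 1\<^sub>m (s * n\<^sup>2)" by (simp add: aug_mat_def)
  have a1: "l * n\<^sup>2 + p < r * n\<^sup>2" "m * n\<^sup>2 + q < r * n\<^sup>2"
    using idx_lt[OF 0(1) 0(4)] idx_lt[OF 0(2) 0(5)] by auto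
  have e1: "(l * n\<^sup>2 + p = m * n\<^sup>2 + q) = (l = m \<and> p = q)" using idx_inj[OF 0(4) 0(5)] by blast
  have lhs: "(?H ^\<^sub>m 0) $$ (l * n\<^sup>2 + p, m * n\<^sup>2 + q) = (if l = m \<and> p = q then 1 else 0)"
    unfolding H0 index_one_mat(1)[OF a1] e1 by (rule refl)
  have S1: "(\<Sum>i\<in>\<Omega> l. (?G ^\<^sub>m 0) $$ (i * n\<^sup>2 + p, j * n\<^sup>2 + q))
      = (\<Sum>i\<in>\<Omega> l. if i = j \<and> p = q then 1 else 0)"
  proof (intro sum.cong refl)
    fix i assume "i \<in> \<Omega> l"
    hence "i < s" using P(1)[OF 0(1)] by auto
    hence a2: "i * n\<^sup>2 + p < s * n\<^sup>2" "j * n\<^sup>2 + q < s * n\<^sup>2"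
      using idx_lt[OF _ 0(4)] idx_lt[OF js 0(5)] by auto
    have e2: "(i * n\<^sup>2 + p = j * n\<^sup>2 + q) = (i = j \<and> p = q)" using idx_inj[OF 0(4) 0(5)] by blast
    show "(?G ^\<^sub>m 0) $$ (i * n\<^sup>2 + p, j * n\<^sup>2 + q) = (if i = j \<and> p = q then 1 else 0)"
      unfolding G0 index_one_mat(1)[OF a2] e2 by (rule refl)
  qed
  have S2: "(\<Sum>i\<in>\<Omega> l. if i = j \<and> p = q then 1 else 0) = (if j \<in> \<Omega> l \<and> p = q then 1 else (0::real))"
  proof (cases "p = q")
    case True
    then show ?thesis using P(2)[OF 0(1)] by (simp add: sum.delta')
  next
    case False
    then show ?thesis by simp
  qed
  have S3: "j \<in> \<Omega> l \<longleftrightarrow> l = m" using P(3)[OF 0(1) 0(2) _ 0(3)] 0(3) by blast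
  show ?case unfolding lhs S1 S2 S3 by (rule refl)
next
  note P = part_facts[OF part]
  let ?G = "aug_mat n s Tf Af"
  let ?H = "aug_mat n r Th Ah"
  case (Suc k)
  have js: "j < s" using P(1) Suc by auto
  have Gc: "?G \<in> carrier_mat (s * n\<^sup>2) (s * n\<^sup>2)" by (rule aug_carrier)
  have Hc: "?H \<in> carrier_mat (r * n\<^sup>2) (r * n\<^sup>2)" by (rule aug_carrier)
  define K where "K = (\<lambda>q'. Ah m $$ (q' div n, q div n) * Ah m $$ (q' mod n, q mod n))"
  have "(?H ^\<^sub>m Suc k) $$ (l * n\<^sup>2 + p, m * n\<^sup>2 + q)
      = (\<Sum>c<r * n\<^sup>2. (?H ^\<^sub>m k) $$ (l * n\<^sup>2 + p, c) * ?H $$ (c, m * n\<^sup>2 + q))"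
    using mult_entry[OF pow_carrier_mat[OF Hc] Hc idx_lt[of l r p "n\<^sup>2"] idx_lt[of m r q "n\<^sup>2"]] Suc.prems
    by simp
  also have "\<dots> = (\<Sum>m'<r. \<Sum>q'<n\<^sup>2. (?H ^\<^sub>m k) $$ (l * n\<^sup>2 + p, m' * n\<^sup>2 + q') * (Th m m' * K q'))"
    unfolding sum_split
  proof (intro sum.cong refl)
    fix m' q' assume "m' \<in> {..<r}" "q' \<in> {..<n\<^sup>2}"
    then show "(?H ^\<^sub>m k) $$ (l * n\<^sup>2 + p, m' * n\<^sup>2 + q') * ?H $$ (m' * n\<^sup>2 + q', m * n\<^sup>2 + q)
       = (?H ^\<^sub>m k) $$ (l * n\<^sup>2 + p, m' * n\<^sup>2 + q') * (Th m m' * K q')"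
      using aug_entry[OF Ah, of m' m q' q] Suc.prems by (simp add: K_def)
  qed
  finally have L: "(?H ^\<^sub>m Suc k) $$ (l * n\<^sup>2 + p, m * n\<^sup>2 + q)
      = (\<Sum>m'<r. \<Sum>q'<n\<^sup>2. (?H ^\<^sub>m k) $$ (l * n\<^sup>2 + p, m' * n\<^sup>2 + q') * (Th m m' * K q'))" .
  have "(\<Sum>i\<in>\<Omega> l. (?G ^\<^sub>m Suc k) $$ (i * n\<^sup>2 + p, j * n\<^sup>2 + q))
     = (\<Sum>i\<in>\<Omega> l. \<Sum>j'<s. \<Sum>q'<n\<^sup>2. (?G ^\<^sub>m k) $$ (i * n\<^sup>2 + p, j' * n\<^sup>2 + q') * (Tf j j' * K q'))"
  proof (intro sum.cong refl)
    fix i assume "i \<in> \<Omega> l"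
    hence is': "i < s" using P(1) Suc by auto
    have "(?G ^\<^sub>m Suc k) $$ (i * n\<^sup>2 + p, j * n\<^sup>2 + q)
      = (\<Sum>c<s * n\<^sup>2. (?G ^\<^sub>m k) $$ (i * n\<^sup>2 + p, c) * ?G $$ (c, j * n\<^sup>2 + q))"
      using mult_entry[OF pow_carrier_mat[OF Gc] Gc idx_lt[of i s p "n\<^sup>2"] idx_lt[of j s q "n\<^sup>2"]] Suc.prems is' js
      by simp
    also have "\<dots> = (\<Sum>j'<s. \<Sum>q'<n\<^sup>2. (?G ^\<^sub>m k) $$ (i * n\<^sup>2 + p, j' * n\<^sup>2 + q') * (Tf j j' * K q'))"
      unfolding sum_split
    proof (intro sum.cong refl)
      fix j' q' assume "j' \<in> {..<s}" "q' \<in> {..<n\<^sup>2}"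
      then show "(?G ^\<^sub>m k) $$ (i * n\<^sup>2 + p, j' * n\<^sup>2 + q') * ?G $$ (j' * n\<^sup>2 + q', j * n\<^sup>2 + q)
         = (?G ^\<^sub>m k) $$ (i * n\<^sup>2 + p, j' * n\<^sup>2 + q') * (Tf j j' * K q')"
        using aug_entry[OF Af, of j' j q' q] Suc.prems js AfAh by (simp add: K_def)
    qed
    finally show "(?G ^\<^sub>m Suc k) $$ (i * n\<^sup>2 + p, j * n\<^sup>2 + q)
       = (\<Sum>j'<s. \<Sum>q'<n\<^sup>2. (?G ^\<^sub>m k) $$ (i * n\<^sup>2 + p, j' * n\<^sup>2 + q') * (Tf j j' * K q'))" .
  qed
  also have "\<dots> = (\<Sum>j'<s. \<Sum>q'<n\<^sup>2. (\<Sum>i\<in>\<Omega> l. (?G ^\<^sub>m k) $$ (i * n\<^sup>2 + p, j' * n\<^sup>2 + q')) * (Tf j j' * K q'))"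
  proof -
    have "(\<Sum>i\<in>\<Omega> l. \<Sum>j'<s. \<Sum>q'<n\<^sup>2. (?G ^\<^sub>m k) $$ (i * n\<^sup>2 + p, j' * n\<^sup>2 + q') * (Tf j j' * K q'))
      = (\<Sum>j'<s. \<Sum>i\<in>\<Omega> l. \<Sum>q'<n\<^sup>2. (?G ^\<^sub>m k) $$ (i * n\<^sup>2 + p, j' * n\<^sup>2 + q') * (Tf j j' * K q'))"
      by (rule sum.swap)
    also have "\<dots> = (\<Sum>j'<s. \<Sum>q'<n\<^sup>2. \<Sum>i\<in>\<Omega> l. (?G ^\<^sub>m k) $$ (i * n\<^sup>2 + p, j' * n\<^sup>2 + q') * (Tf j j' * K q'))"
      by (rule sum.cong[OF refl]) (rule sum.swap)
    finally show ?thesis by (simp add: sum_distrib_right)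
  qed
  also have "\<dots> = (\<Sum>m'<r. \<Sum>j'\<in>\<Omega> m'. \<Sum>q'<n\<^sup>2. (\<Sum>i\<in>\<Omega> l. (?G ^\<^sub>m k) $$ (i * n\<^sup>2 + p, j' * n\<^sup>2 + q')) * (Tf j j' * K q'))"
    unfolding P(5) using P(2) P(3)
    by (subst sum.UNION_disjoint) auto
  also have "\<dots> = (\<Sum>m'<r. \<Sum>j'\<in>\<Omega> m'. \<Sum>q'<n\<^sup>2. (?H ^\<^sub>m k) $$ (l * n\<^sup>2 + p, m' * n\<^sup>2 + q') * (Tf j j' * K q'))"
    using Suc.IH Suc.prems by (intro sum.cong refl) auto
  also have "\<dots> = (\<Sum>m'<r. \<Sum>q'<n\<^sup>2. (?H ^\<^sub>m k) $$ (l * n\<^sup>2 + p, m' * n\<^sup>2 + q') * ((\<Sum>j'\<in>\<Omega> m'. Tf j j') * K q'))"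
    by (rule sum.cong[OF refl], subst sum.swap) (simp add: sum_distrib_left sum_distrib_right mult_ac)
  also have "\<dots> = (\<Sum>m'<r. \<Sum>q'<n\<^sup>2. (?H ^\<^sub>m k) $$ (l * n\<^sup>2 + p, m' * n\<^sup>2 + q') * (Th m m' * K q'))"
    using TS Suc.prems by (intro sum.cong refl) auto
  finally show ?case using L by simp
qed


lemma wp_map:
  "(\<forall>x\<in>set \<sigma>. M x = M' (g x)) \<Longrightarrow> mat_word_prod n M \<sigma> = mat_word_prod n M' (map g \<sigma>)"
  by (induction \<sigma>) (auto simp: mat_word_prod_def)

theorem lemma2:
  fixes n p s r :: nat and A B :: "nat \<Rightarrow> real mat" and T :: "nat \<Rightarrow> nat \<Rightarrow> real"
    and \<Omega> :: "nat \<Rightarrow> nat set"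
    and Abar Bbar :: "nat \<Rightarrow> real mat" and Tbar :: "nat \<Rightarrow> nat \<Rightarrow> real"
  assumes A: "\<forall>i<s. A i \<in> carrier_mat n n"
    and B: "\<forall>i<s. B i \<in> carrier_mat n p"
    and T: "markov s T"
    and part: "is_partition s r \<Omega>"
    and Abar: "\<forall>k<r. \<forall>i\<in>\<Omega> k. Abar i = red_mat \<Omega> A n n k"
    and Bbar: "\<forall>k<r. \<forall>i\<in>\<Omega> k. Bbar i = red_mat \<Omega> B n p k"
    and Tbar: "markov s Tbar"
    and Tbar_sum: "\<forall>k<r. \<forall>l<r. \<forall>i\<in>\<Omega> k. (\<Sum>j\<in>\<Omega> l. Tbar i j) = red_T \<Omega> T k l"
  shows "rho (aug_mat n r (red_T \<Omega> T) (red_mat \<Omega> A n n)) = rho (aug_mat n s Tbar Abar)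
       \<and> jsr n (red_mat \<Omega> A n n) r = jsr n Abar s"
proof -
  note P = part_facts[OF part]
  have ne: "\<And>m. m < r \<Longrightarrow> \<Omega> m \<noteq> {}" using part unfolding is_partition_def by auto
  let ?Ah = "red_mat \<Omega> A n n"
  let ?Th = "red_T \<Omega> T"
  let ?H = "aug_mat n r ?Th ?Ah"
  let ?G = "aug_mat n s Tbar Abar"
  have Ahc: "\<forall>m<r. ?Ah m \<in> carrier_mat n n" by (simp add: red_mat_def)
  have AfAh: "\<forall>m<r. \<forall>j\<in>\<Omega> m. Abar j = ?Ah m" using Abar by auto
  have Abarc: "\<forall>j<s. Abar j \<in> carrier_mat n n"
  proof (intro allI impI)
    fix j assume "j < s"
    then obtain m where "m < r" "j \<in> \<Omega> m" using P(4) by blast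
    then show "Abar j \<in> carrier_mat n n" using AfAh Ahc by auto
  qed
  have TS: "\<forall>m<r. \<forall>m'<r. \<forall>j\<in>\<Omega> m. (\<Sum>j'\<in>\<Omega> m'. Tbar j j') = ?Th m m'" using Tbar_sum by auto
  have Tnn: "\<forall>i<s. \<forall>j<s. Tbar i j \<ge> 0" using Tbar unfolding markov_def by auto
  note F1 = lump_power[OF part Abarc Ahc AfAh TS]
  note F2 = cp_power[OF Abarc Tnn]
  have Hc: "?H \<in> carrier_mat (r * n\<^sup>2) (r * n\<^sup>2)" by (rule aug_carrier)
  have Gc: "?G \<in> carrier_mat (s * n\<^sup>2) (s * n\<^sup>2)" by (rule aug_carrier)
  have rho_eq: "rho ?H = rho ?G"
  proof (cases "n = 0 \<or> r = 0")
    case True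
    have "r = 0 \<Longrightarrow> s = 0" using P(4) by (cases s) auto
    with True have "r * n\<^sup>2 = 0" "s * n\<^sup>2 = 0" by auto
    hence "map_mat complex_of_real ?H = map_mat complex_of_real ?G"
      using Hc Gc by (intro eq_matI) auto
    then show ?thesis unfolding rho_def by simp
  next
    case False
    hence n0: "n > 0" and r0: "r > 0" by auto
    from ne[OF r0] P(1)[OF r0] have s0: "s > 0" by auto
    have NH: "r * n\<^sup>2 > 0" and NG: "s * n\<^sup>2 > 0" using n0 r0 s0 by auto
    have dec: "\<exists>i p. i < N \<and> p < n\<^sup>2 \<and> a = i * n\<^sup>2 + p" if "a < N * n\<^sup>2" for a N
    proof (intro exI conjI)
      show "a div n\<^sup>2 < N" using that by (simp add: less_mult_imp_div_less)
      show "a mod n\<^sup>2 < n\<^sup>2" using n0 by simp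
      show "a = a div n\<^sup>2 * n\<^sup>2 + a mod n\<^sup>2" by (rule div_mult_mod_eq[symmetric])
    qed
    have dec2: "\<exists>p1 p2. p1 < n \<and> p2 < n \<and> p = p1 * n + p2" if "p < n\<^sup>2" for p
    proof (intro exI conjI)
      show "p div n < n" using that by (simp add: less_mult_imp_div_less power2_eq_square)
      show "p mod n < n" using n0 by simp
      show "p = p div n * n + p mod n" by (rule div_mult_mod_eq[symmetric])
    qed
    have pp: "p1 * n + p2 < n\<^sup>2" if "p1 < n" "p2 < n" for p1 p2
      using idx_lt[OF that] by (simp add: power2_eq_square)
    have le1: "rho ?H \<le> rho ?G"
    proof (rule ccontr)
      assume "\<not> rho ?H \<le> rho ?G"
      hence lt: "rho ?G < rho ?H" by simp
      define c where "c = (rho ?G + rho ?H) / 2"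
      have c0: "c > 0" using rho_nonneg[OF Gc NG] lt by (simp add: c_def)
      have c1: "rho ?G < c" "c < rho ?H" using lt by (auto simp: c_def)
      obtain C where C: "\<And>k a b. a < s * n\<^sup>2 \<Longrightarrow> b < s * n\<^sup>2 \<Longrightarrow> \<bar>(?G ^\<^sub>m k) $$ (a,b)\<bar> \<le> C * c^k"
        using growth_upper[OF Gc c0 c1(1)] by blast
      have bnd: "\<bar>(?H ^\<^sub>m k) $$ (a,b)\<bar> \<le> (real s * \<bar>C\<bar>) * c^k" if ab: "a < r * n\<^sup>2" "b < r * n\<^sup>2" for k a b
      proof -
        obtain l p where lp: "l < r" "p < n\<^sup>2" "a = l * n\<^sup>2 + p" using dec[OF ab(1)] by blast
        obtain m q where mq: "m < r" "q < n\<^sup>2" "b = m * n\<^sup>2 + q" using dec[OF ab(2)] by blast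
        obtain j where j: "j \<in> \<Omega> m" using ne[OF mq(1)] by blast
        have js: "j < s" using P(1)[OF mq(1)] j by auto
        have "(?H ^\<^sub>m k) $$ (a,b) = (\<Sum>i\<in>\<Omega> l. (?G ^\<^sub>m k) $$ (i * n\<^sup>2 + p, j * n\<^sup>2 + q))"
          using F1[OF lp(1) mq(1) j lp(2) mq(2)] lp mq by simp
        hence "\<bar>(?H ^\<^sub>m k) $$ (a,b)\<bar> \<le> (\<Sum>i\<in>\<Omega> l. \<bar>(?G ^\<^sub>m k) $$ (i * n\<^sup>2 + p, j * n\<^sup>2 + q)\<bar>)"
          by simp
        also have "\<dots> \<le> (\<Sum>i\<in>\<Omega> l. \<bar>C\<bar> * c^k)"
        proof (rule sum_mono)
          fix i assume "i \<in> \<Omega> l"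
          hence "i < s" using P(1)[OF lp(1)] by auto
          hence "\<bar>(?G ^\<^sub>m k) $$ (i * n\<^sup>2 + p, j * n\<^sup>2 + q)\<bar> \<le> C * c^k"
            using C idx_lt[OF _ lp(2)] idx_lt[OF js mq(2)] by blast
          also have "\<dots> \<le> \<bar>C\<bar> * c^k" using c0 by (intro mult_right_mono) auto
          finally show "\<bar>(?G ^\<^sub>m k) $$ (i * n\<^sup>2 + p, j * n\<^sup>2 + q)\<bar> \<le> \<bar>C\<bar> * c^k" .
        qed
        also have "\<dots> = real (card (\<Omega> l)) * (\<bar>C\<bar> * c^k)" by simp
        also have "\<dots> \<le> real s * (\<bar>C\<bar> * c^k)"
        proof (rule mult_right_mono)
          have "card (\<Omega> l) \<le> card {..<s}" using P(1)[OF lp(1)] by (intro card_mono) auto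
          then show "real (card (\<Omega> l)) \<le> real s" by simp
          show "0 \<le> \<bar>C\<bar> * c^k" using c0 by simp
        qed
        finally show ?thesis by (simp add: mult.assoc)
      qed
      show False by (rule growth_lower[OF Hc NH c0 c1(2) bnd])
    qed
    have le2: "rho ?G \<le> rho ?H"
    proof (rule ccontr)
      assume "\<not> rho ?G \<le> rho ?H"
      hence lt: "rho ?H < rho ?G" by simp
      define c where "c = (rho ?G + rho ?H) / 2"
      have c0: "c > 0" using rho_nonneg[OF Hc NH] lt by (simp add: c_def)
      have c1: "rho ?H < c" "c < rho ?G" using lt by (auto simp: c_def)
      obtain C where C: "\<And>k a b. a < r * n\<^sup>2 \<Longrightarrow> b < r * n\<^sup>2 \<Longrightarrow> \<bar>(?H ^\<^sub>m k) $$ (a,b)\<bar> \<le> C * c^k"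
        using growth_upper[OF Hc c0 c1(1)] by blast
      have diag: "(?G ^\<^sub>m k) $$ (i * n\<^sup>2 + (p * n + p), j * n\<^sup>2 + (q * n + q)) \<le> C * c^k"
        if ij: "i < s" "j < s" "p < n" "q < n" for k i j p q
      proof -
        obtain l where l: "l < r" "i \<in> \<Omega> l" using P(4)[OF ij(1)] by blast
        obtain m where m: "m < r" "j \<in> \<Omega> m" using P(4)[OF ij(2)] by blast
        have nn: "0 \<le> (?G ^\<^sub>m k) $$ (i' * n\<^sup>2 + (p * n + p), j * n\<^sup>2 + (q * n + q))" if "i' \<in> \<Omega> l" for i'
        proof -
          have "i' < s" using P(1)[OF l(1)] that by auto
          then obtain f where f: "cpf f" and fe: "\<forall>p1<n. \<forall>p2<n. \<forall>q1<n. \<forall>q2<n.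
            (?G ^\<^sub>m k) $$ (i' * n\<^sup>2 + (p1 * n + p2), j * n\<^sup>2 + (q1 * n + q2)) = f p1 p2 q1 q2"
            using F2[OF _ ij(2)] by blast
          have "(?G ^\<^sub>m k) $$ (i' * n\<^sup>2 + (p * n + p), j * n\<^sup>2 + (q * n + q)) = f p p q q"
            using fe ij(3) ij(4) by blast
          then show ?thesis using cpf_nonneg[OF f, of p q] by linarith
        qed
        have "(?G ^\<^sub>m k) $$ (i * n\<^sup>2 + (p * n + p), j * n\<^sup>2 + (q * n + q))
           \<le> (\<Sum>i'\<in>\<Omega> l. (?G ^\<^sub>m k) $$ (i' * n\<^sup>2 + (p * n + p), j * n\<^sup>2 + (q * n + q)))"
        proof (rule member_le_sum[OF l(2)])
          fix x assume "x \<in> \<Omega> l - {i}"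
          hence "x \<in> \<Omega> l" by blast
          from nn[OF this] show "0 \<le> (?G ^\<^sub>m k) $$ (x * n\<^sup>2 + (p * n + p), j * n\<^sup>2 + (q * n + q))" .
        next
          show "finite (\<Omega> l)" by (rule P(2)[OF l(1)])
        qed
        also have "\<dots> = (?H ^\<^sub>m k) $$ (l * n\<^sup>2 + (p * n + p), m * n\<^sup>2 + (q * n + q))"
          using F1[OF l(1) m(1) m(2) pp[OF ij(3) ij(3)] pp[OF ij(4) ij(4)]] by simp
        also have "\<dots> \<le> C * c^k"
          by (rule order_trans[OF abs_ge_self C[OF idx_lt[OF l(1) pp[OF ij(3) ij(3)]] idx_lt[OF m(1) pp[OF ij(4) ij(4)]]]])
        finally show ?thesis .
      qed
      have bnd: "\<bar>(?G ^\<^sub>m k) $$ (a,b)\<bar> \<le> C * c^k" if ab: "a < s * n\<^sup>2" "b < s * n\<^sup>2" for k a b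
      proof -
        obtain i p where ip: "i < s" "p < n\<^sup>2" "a = i * n\<^sup>2 + p" using dec[OF ab(1)] by blast
        obtain j q where jq: "j < s" "q < n\<^sup>2" "b = j * n\<^sup>2 + q" using dec[OF ab(2)] by blast
        obtain p1 p2 where pp12: "p1 < n" "p2 < n" "p = p1 * n + p2" using dec2[OF ip(2)] by blast
        obtain q1 q2 where qq12: "q1 < n" "q2 < n" "q = q1 * n + q2" using dec2[OF jq(2)] by blast
        obtain f where f: "cpf f" and fe: "\<forall>p1<n. \<forall>p2<n. \<forall>q1<n. \<forall>q2<n.
            (?G ^\<^sub>m k) $$ (i * n\<^sup>2 + (p1 * n + p2), j * n\<^sup>2 + (q1 * n + q2)) = f p1 p2 q1 q2"
          using F2[OF ip(1) jq(1)] by blast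
        have "(?G ^\<^sub>m k) $$ (a,b) = f p1 p2 q1 q2" unfolding ip(3) jq(3) pp12(3) qq12(3)
          using fe pp12(1,2) qq12(1,2) by blast
        moreover have "\<bar>f p1 p2 q1 q2\<bar> \<le> (f p1 p1 q1 q1 + f p2 p2 q2 q2) / 2" by (rule cpf_bound[OF f])
        moreover have "f p1 p1 q1 q1 \<le> C * c^k"
        proof -
          have "(?G ^\<^sub>m k) $$ (i * n\<^sup>2 + (p1 * n + p1), j * n\<^sup>2 + (q1 * n + q1)) = f p1 p1 q1 q1"
            using fe pp12(1) qq12(1) by blast
          with diag[OF ip(1) jq(1) pp12(1) qq12(1), of k] show ?thesis by simp
        qed
        moreover have "f p2 p2 q2 q2 \<le> C * c^k"
        proof -
          have "(?G ^\<^sub>m k) $$ (i * n\<^sup>2 + (p2 * n + p2), j * n\<^sup>2 + (q2 * n + q2)) = f p2 p2 q2 q2"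
            using fe pp12(2) qq12(2) by blast
          with diag[OF ip(1) jq(1) pp12(2) qq12(2), of k] show ?thesis by simp
        qed
        ultimately show ?thesis by simp
      qed
      show False by (rule growth_lower[OF Gc NG c0 c1(2) bnd])
    qed
    show ?thesis using le1 le2 by simp
  qed
  define rep where "rep = (\<lambda>m. SOME i. i \<in> \<Omega> m)"
  define cls where "cls = (\<lambda>j. SOME m. m < r \<and> j \<in> \<Omega> m)"
  have rep: "rep m \<in> \<Omega> m" if mr: "m < r" for m
  proof -
    obtain x where "x \<in> \<Omega> m" using ne[OF mr] by blast
    then show ?thesis unfolding rep_def by (rule someI)
  qed
  have cls: "\<And>j. j < s \<Longrightarrow> cls j < r \<and> j \<in> \<Omega> (cls j)" unfolding cls_def using P(4)
    by (metis (no_types, lifting) someI_ex)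
  have sets: "{frob_norm (mat_word_prod n ?Ah \<sigma>) powr (1 / real k) | \<sigma>. length \<sigma> = k \<and> set \<sigma> \<subseteq> {..<r}}
    = {frob_norm (mat_word_prod n Abar \<sigma>) powr (1 / real k) | \<sigma>. length \<sigma> = k \<and> set \<sigma> \<subseteq> {..<s}}"
    (is "?S1 = ?S2") for k
  proof (rule equalityI)
    show "?S1 \<subseteq> ?S2"
    proof
      fix x assume "x \<in> ?S1"
      then obtain \<sigma> where x: "x = frob_norm (mat_word_prod n ?Ah \<sigma>) powr (1 / real k)" "length \<sigma> = k" "set \<sigma> \<subseteq> {..<r}" by blast
      have "mat_word_prod n ?Ah \<sigma> = mat_word_prod n Abar (map rep \<sigma>)"
        by (rule wp_map) (use x(3) rep AfAh in auto)
      moreover have "set (map rep \<sigma>) \<subseteq> {..<s}" using x(3) rep P(1) by fastforce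
      ultimately show "x \<in> ?S2"
        using x by (intro CollectI exI[of _ "map rep \<sigma>"]) auto
    qed
  next
    show "?S2 \<subseteq> ?S1"
    proof
      fix x assume "x \<in> ?S2"
      then obtain \<sigma> where x: "x = frob_norm (mat_word_prod n Abar \<sigma>) powr (1 / real k)" "length \<sigma> = k" "set \<sigma> \<subseteq> {..<s}" by blast
      have "mat_word_prod n Abar \<sigma> = mat_word_prod n ?Ah (map cls \<sigma>)"
        by (rule wp_map) (use x(3) cls AfAh in auto)
      moreover have "set (map cls \<sigma>) \<subseteq> {..<r}" using x(3) cls by auto
      ultimately show "x \<in> ?S1"
        using x by (intro CollectI exI[of _ "map cls \<sigma>"]) auto
    qed
  qed
  have "jsr n ?Ah r = jsr n Abar s" unfolding jsr_def sets ..
  with rho_eq show ?thesis by simp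
qed

end
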